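(* Let $q > 1$ be an integer. For all positive integers $n$ and $M$, if $W$ is chosen uniformly at random from $\{x_0,\ldots,x_{q-1}\}^M$, then $$\Pr\left(W \in C(n,q,M)\right) \leq \left(\frac{q}{q-1}\right)^{n-1}q^{-2^n+n+1}.$$
   Context: Fix the alphabet $\{x_0,\ldots,x_{q-1}\}$ of $q$ letters. A word $W$ is an instance of a word $V = y_0y_1\cdots y_{m-1}$ (each $y_i$ a letter) if $W = A_0A_1\cdots A_{m-1}$ with each $A_i$ a nonempty word and $A_i = A_j$ whenever $y_i = y_j$. The Zimin words are defined by $Z_0 := \varepsilon$ (the empty word) and $Z_{n+1} := Z_n z_n Z_n$ for distinct letters $z_0,z_1,\dots$. $C(n,q,M)$ denotes the set of words $W \in \{x_0,\ldots,x_{q-1}\}^M$ that are instances of $Z_n$. *)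

theory Defs
  imports "HOL-Analysis.Analysis"
begin

(* Words are lists of natural numbers; letter x_i is represented by i. *)

(* Zimin words over the pattern alphabet z_0, z_1, ... (z_i represented by i):
   Z_0 = empty, Z_{n+1} = Z_n z_n Z_n *)
fun zimin :: "nat \<Rightarrow> nat list" where
  "zimin 0 = []"
| "zimin (Suc n) = zimin n @ [n] @ zimin n"

(* W is an instance of V = y_0 ... y_{m-1}: W = A_0 ... A_{m-1}, each A_i nonempty,
   A_i = A_j whenever y_i = y_j.  Equivalently, a substitution assigning a nonempty
   word to each letter of V. *)
definition is_instance :: "'a list \<Rightarrow> 'b list \<Rightarrow> bool" where
  "is_instance W V \<longleftrightarrow>
     (\<exists>f :: 'b \<Rightarrow> 'a list. (\<forall>y\<in>set V. f y \<noteq> []) \<and> W = concat (map f V))"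

definition C :: "nat \<Rightarrow> nat \<Rightarrow> nat \<Rightarrow> nat list set" where
  "C n q M = {W. set W \<subseteq> {0..<q} \<and> length W = M \<and> is_instance W (zimin n)}"

end

theory Submission
  imports Defs
begin

definition words :: "nat \<Rightarrow> nat \<Rightarrow> nat list set" where
  "words q L = {W::nat list. set W \<subseteq> {0..<q} \<and> length W = L}"

lemma card_words: "card (words q L) = q ^ L"
  unfolding words_def using card_lists_length_eq[of "{0..<q}" L] by simp

lemma finite_words: "finite (words q L)"
  unfolding words_def by (rule finite_lists_length_eq) simp

lemma C_sub_words: "C n q M \<subseteq> words q M"
  unfolding C_def words_def by auto

lemma finite_C: "finite (C n q M)"
  using finite_subset[OF C_sub_words finite_words] .

lemma len_zimin1: "length (zimin n) + 1 = 2 ^ n"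
  by (induction n) auto

lemma len_zimin: "length (zimin n) = 2 ^ n - 1"
  using len_zimin1[of n] by linarith

lemma len_concat_ge: "(\<forall>y\<in>set V. f y \<noteq> []) \<Longrightarrow> length V \<le> length (concat (map f V))"
proof (induction V)
  case Nil then show ?case by simp
next
  case (Cons a V)
  then have "length (f a) \<ge> 1" by (simp add: Suc_leI)
  with Cons show ?case by simp
qed

lemma C_empty: "a < 2 ^ n - 1 \<Longrightarrow> C n q a = {}"
proof (rule ccontr)
  assume a: "a < 2 ^ n - 1" and "C n q a \<noteq> {}"
  then obtain W where "W \<in> C n q a" by blast
  then obtain f where f: "\<forall>y\<in>set (zimin n). f y \<noteq> []" "W = concat (map f (zimin n))"
    and l: "length W = a"
    unfolding C_def is_instance_def by blast
  have "length (zimin n) \<le> length W" using len_concat_ge[OF f(1)] f(2) by simp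
  then show False using a l len_zimin[of n] by simp
qed

lemma C_Suc_sub:
  "C (Suc n) q M \<subseteq> (\<Union>a\<in>{a. 2*a < M}. (\<lambda>(A,B). A@B@A) ` (C n q a \<times> words q (M-2*a)))"
proof
  fix W assume W: "W \<in> C (Suc n) q M"
  then obtain f where f: "\<forall>y\<in>set (zimin (Suc n)). f y \<noteq> []"
     and Weq: "W = concat (map f (zimin (Suc n)))"
    unfolding C_def is_instance_def by blast
  define A where "A = concat (map f (zimin n))"
  have WA: "W = A @ f n @ A" using Weq by (simp add: A_def)
  have fn: "f n \<noteq> []" using f by simp
  have fA: "\<forall>y\<in>set (zimin n). f y \<noteq> []" using f by simp
  have setW: "set W \<subseteq> {0..<q}" "length W = M" using W unfolding C_def by auto
  have AC: "A \<in> C n q (length A)"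
    unfolding C_def is_instance_def using fA setW WA A_def by auto
  have Bw: "f n \<in> words q (M - 2 * length A)"
    unfolding words_def using setW WA by auto
  have lt: "2 * length A < M" using setW WA fn by (cases "f n") auto
  show "W \<in> (\<Union>a\<in>{a. 2*a < M}. (\<lambda>(A,B). A@B@A) ` (C n q a \<times> words q (M-2*a)))"
  proof (rule UN_I)
    show "length A \<in> {a. 2*a < M}" using lt by simp
    have "(A, f n) \<in> C n q (length A) \<times> words q (M - 2 * length A)" using AC Bw by simp
    then show "W \<in> (\<lambda>(A,B). A@B@A) ` (C n q (length A) \<times> words q (M-2*length A))"
      using WA by (auto intro: rev_image_eqI)
  qed
qed

lemma card_C_Suc:
  "card (C (Suc n) q M) \<le> (\<Sum>a\<in>{a. 2*a < M}. card (C n q a) * q ^ (M - 2*a))"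
proof -
  have fin: "finite {a::nat. 2*a < M}" by (rule finite_subset[of _ "{..<M}"]) auto
  have "card (C (Suc n) q M) \<le> card (\<Union>a\<in>{a. 2*a < M}. (\<lambda>(A,B). A@B@A) ` (C n q a \<times> words q (M-2*a)))"
    by (rule card_mono) (auto intro!: finite_UN_I fin finite_C finite_words simp: C_Suc_sub[simplified])
  also have "\<dots> \<le> (\<Sum>a\<in>{a. 2*a < M}. card ((\<lambda>(A,B). A@B@A) ` (C n q a \<times> words q (M-2*a))))"
    by (rule card_UN_le[OF fin])
  also have "\<dots> \<le> (\<Sum>a\<in>{a. 2*a < M}. card (C n q a) * q ^ (M - 2*a))"
  proof (rule sum_mono)
    fix a
    have "card ((\<lambda>(A,B). A@B@A) ` (C n q a \<times> words q (M-2*a))) \<le> card (C n q a \<times> words q (M-2*a))"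
      by (rule card_image_le) (simp add: finite_C finite_words)
    also have "\<dots> = card (C n q a) * q ^ (M - 2*a)" by (simp add: card_cartesian_product card_words)
    finally show "card ((\<lambda>(A,B). A@B@A) ` (C n q a \<times> words q (M-2*a))) \<le> card (C n q a) * q ^ (M - 2*a)" .
  qed
  finally show ?thesis .
qed

lemma geom_bound:
  fixes x :: real
  assumes "0 \<le> x" "x < 1" "finite S" "\<forall>a\<in>S. a \<ge> k"
  shows "(\<Sum>a\<in>S. x ^ a) \<le> x ^ k / (1 - x)"
proof -
  define N where "N = Suc (Max (insert 0 S))"
  have N: "S \<subseteq> {k..<k+N}"
  proof
    fix a assume "a \<in> S"
    then have "a \<le> Max (insert 0 S)" using assms(3) by simp
    then show "a \<in> {k..<k+N}" using assms(4) \<open>a \<in> S\<close> by (auto simp: N_def)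
  qed
  have "(\<Sum>a\<in>S. x ^ a) \<le> (\<Sum>a\<in>{k..<k+N}. x ^ a)"
    by (rule sum_mono2) (use N assms in auto)
  also have "\<dots> = (\<Sum>i<N. x ^ (k + i))"
    by (rule sum.reindex_bij_witness[of _ "\<lambda>i. k + i" "\<lambda>a. a - k"]) auto
  also have "\<dots> = x ^ k * (\<Sum>i<N. x ^ i)" by (simp add: power_add sum_distrib_left)
  also have "(\<Sum>i<N. x ^ i) = (1 - x ^ N) / (1 - x)"
    using assms by (subst geometric_sum) (auto simp: field_simps)
  also have "x ^ k * ((1 - x ^ N) / (1 - x)) \<le> x ^ k / (1 - x)"
  proof -
    have "x ^ k * (1 - x ^ N) \<le> x ^ k"
      using assms by (simp add: right_diff_distrib)
    then show ?thesis using assms by (simp add: divide_right_mono)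
  qed
  finally show ?thesis .
qed

definition Bnd :: "nat \<Rightarrow> nat \<Rightarrow> real" where
  "Bnd q n = (real q / (real q - 1)) ^ (n - 1) * real q powr (- (2 ^ n) + real n + 1)"

lemma Bnd_Suc:
  assumes q: "q > 1" and n: "n \<ge> 1"
  shows "Bnd q n * ((1 / real q) ^ (2 ^ n - 1) / (1 - 1 / real q)) = Bnd q (Suc n)"
proof -
  have qr: "real q > 1" using q by simp
  have K: "real (2 ^ n - 1 :: nat) = 2 ^ n - 1"
    by (simp add: of_nat_diff)
  have x: "(1 / real q) ^ (2 ^ n - 1) = real q powr (1 - 2 ^ n)"
  proof -
    have gen: "\<And>m::nat. real q powr (- real m) = inverse (real q ^ m)"
      using qr by (simp add: powr_minus powr_realpow)
    have "real q powr (- real (2 ^ n - 1 :: nat)) = inverse (real q ^ (2 ^ n - 1))"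
      by (rule gen)
    then have "(1 / real q) ^ (2 ^ n - 1) = real q powr (- real (2 ^ n - 1 :: nat))"
      by (simp add: power_one_over divide_inverse power_inverse)
    then show ?thesis using K by simp
  qed
  have d: "1 / (1 - 1 / real q) = real q / (real q - 1)" using qr by (simp add: field_simps)
  have p: "(real q / (real q - 1)) ^ n = (real q / (real q - 1)) ^ (n - 1) * (real q / (real q - 1))"
    using n by (metis Suc_diff_le diff_Suc_1 mult.commute power_Suc)
  have e: "real q powr (- (2 ^ n) + real n + 1) * real q powr (1 - 2 ^ n)
      = real q powr (- (2 ^ Suc n) + real (Suc n) + 1)"
    by (simp add: powr_add[symmetric])
  define r where "r = real q / (real q - 1)"
  define P where "P = real q powr (- (2 ^ n) + real n + 1)"
  define Q where "Q = real q powr (1 - 2 ^ n)"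
  have d': "Q / (1 - 1 / real q) = Q * r" unfolding r_def using d
    by (metis times_divide_eq_right mult.right_neutral)
  have "Bnd q n * ((1 / real q) ^ (2 ^ n - 1) / (1 - 1 / real q)) = r ^ (n - 1) * P * (Q / (1 - 1 / real q))"
    unfolding Bnd_def x r_def P_def Q_def by simp
  also have "\<dots> = (r ^ (n - 1) * r) * (P * Q)" unfolding d' by (simp only: mult_ac)
  also have "\<dots> = Bnd q (Suc n)" unfolding Bnd_def r_def P_def Q_def using p e by simp
  finally show ?thesis .
qed

lemma main_bound:
  assumes q: "q > 1" and n: "n \<ge> 1"
  shows "real (card (C n q M)) \<le> real q ^ M * Bnd q n"
  using n
proof (induction n arbitrary: M rule: dec_induct)
  case base
  have "card (C 1 q M) \<le> card (words q M)"
    by (rule card_mono[OF finite_words C_sub_words])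
  then have "real (card (C 1 q M)) \<le> real q ^ M" by (simp add: card_words flip: of_nat_power)
  moreover have "Bnd q 1 = 1" unfolding Bnd_def using q by simp
  ultimately show ?case by simp
next
  case (step n)
  have qr: "real q > 1" using q by simp
  define x where "x = 1 / real q"
  define K where "K = (2 ^ n - 1 :: nat)"
  define S where "S = {a::nat. 2*a < M}"
  have finS: "finite S" unfolding S_def by (rule finite_subset[of _ "{..<M}"]) auto
  have B0: "Bnd q n \<ge> 0" unfolding Bnd_def using qr by simp
  have "real (card (C (Suc n) q M)) \<le> real (\<Sum>a\<in>S. card (C n q a) * q ^ (M - 2*a))"
    using card_C_Suc[of n q M] unfolding S_def by linarith
  also have "\<dots> = (\<Sum>a\<in>S. real (card (C n q a)) * real q ^ (M - 2*a))"
    by simp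
  also have "\<dots> \<le> (\<Sum>a\<in>S. if K \<le> a then real q ^ M * Bnd q n * x ^ a else 0)"
  proof (rule sum_mono)
    fix a assume aS: "a \<in> S"
    show "real (card (C n q a)) * real q ^ (M - 2*a) \<le> (if K \<le> a then real q ^ M * Bnd q n * x ^ a else 0)"
    proof (cases "K \<le> a")
      case False
      then have "C n q a = {}" using C_empty[of a n q] unfolding K_def by simp
      then show ?thesis using False by simp
    next
      case True
      have M: "M = (M - 2*a) + a + a" using aS unfolding S_def by simp
      have eq: "real q ^ a * real q ^ (M - 2*a) = real q ^ M * x ^ a"
      proof -
        have "real q ^ M * x ^ a = real q ^ (M - 2*a) * real q ^ a * (real q ^ a * x ^ a)"
          by (subst M) (simp add: power_add)
        also have "real q ^ a * x ^ a = 1" unfolding x_def using qr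
          by (simp add: power_one_over)
        finally show ?thesis by simp
      qed
      have "real (card (C n q a)) * real q ^ (M - 2*a) \<le> (real q ^ a * Bnd q n) * real q ^ (M - 2*a)"
        by (rule mult_right_mono[OF step.IH]) simp
      also have "\<dots> = real q ^ M * Bnd q n * x ^ a" using eq by (simp add: algebra_simps)
      finally show ?thesis using True by simp
    qed
  qed
  also have "\<dots> = (\<Sum>a\<in>{a\<in>S. K \<le> a}. real q ^ M * Bnd q n * x ^ a)"
    by (simp add: sum.inter_filter[OF finS])
  also have "\<dots> = real q ^ M * Bnd q n * (\<Sum>a\<in>{a\<in>S. K \<le> a}. x ^ a)"
    by (simp add: sum_distrib_left)
  also have "\<dots> \<le> real q ^ M * Bnd q n * (x ^ K / (1 - x))"
    by (rule mult_left_mono[OF geom_bound]) (use finS qr B0 in \<open>auto simp: x_def\<close>)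
  also have "\<dots> = real q ^ M * Bnd q (Suc n)"
    using Bnd_Suc[OF q step.hyps(1)] unfolding x_def K_def by (simp only: mult.assoc)
  finally show ?case .
qed

theorem mainTheorem6:
  fixes q n M :: nat
  assumes "q > 1" and "n > 0" and "M > 0"
  shows "real (card (C n q M)) / real (card {W :: nat list. set W \<subseteq> {0..<q} \<and> length W = M})
           \<le> (real q / (real q - 1)) ^ (n - 1) * real q powr (- (2 ^ n) + real n + 1)"
proof -
  have c: "card {W :: nat list. set W \<subseteq> {0..<q} \<and> length W = M} = q ^ M"
    using card_words[of q M] unfolding words_def .
  have pos: "real q ^ M > 0" using assms by simp
  have "real (card (C n q M)) \<le> real q ^ M * Bnd q n"
    using main_bound[OF assms(1)] assms(2) by simp
  then show ?thesis unfolding c Bnd_def using pos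
    by (simp add: divide_le_eq mult.commute)
qed

end
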